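(* Let $G$ and $H$ be finite graphs such that $G$ does not contain $H$ as a minor, let $k\ge 1$ be an integer, and let $J$ be the $k$-subdivision of $H$. If $f$ is an embedding of the shortest-path metric of $J$ into the shortest-path metric of $G$, then the distortion of $f$ is at least $k/6-1/2$.
   Context: All graphs carry their shortest-path metric with every edge of length $1$. The $k$-subdivision of a graph $H$ is the graph obtained by replacing each edge of $H$ by a path of length $k$. For metric spaces $(X,\nu)$, $(Y,\mu)$ and an injective map $\Phi:X\to Y$, the distortion of $\Phi$ is $\|\Phi\|\cdot\|\Phi^{-1}\|$, where $\|\Phi\|=\max_{x\neq y}\mu(\Phi(x),\Phi(y))/\nu(x,y)$ and $\|\Phi^{-1}\|=\max_{x\neq y}\nu(x,y)/\mu(\Phi(x),\Phi(y))$. *)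

theory Defs
  imports Complex_Main
begin

type_synonym 'a graph = "'a set \<times> 'a set set"

definition verts :: "'a graph \<Rightarrow> 'a set" where "verts G = fst G"
definition edges :: "'a graph \<Rightarrow> 'a set set" where "edges G = snd G"

definition fin_graph :: "'a graph \<Rightarrow> bool" where
  "fin_graph G \<longleftrightarrow> finite (verts G) \<and> (\<forall>e\<in>edges G. e \<subseteq> verts G \<and> card e = 2)"

definition walk :: "'a graph \<Rightarrow> 'a list \<Rightarrow> bool" where
  "walk G xs \<longleftrightarrow> xs \<noteq> [] \<and> set xs \<subseteq> verts G \<and>
     (\<forall>i. Suc i < length xs \<longrightarrow> {xs ! i, xs ! Suc i} \<in> edges G)"

definition connected_in :: "'a graph \<Rightarrow> 'a set \<Rightarrow> bool" where
  "connected_in G S \<longleftrightarrow> (\<forall>x\<in>S. \<forall>y\<in>S. \<exists>xs. walk G xs \<and> set xs \<subseteq> S \<and> hd xs = x \<and> last xs = y)"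

definition connected_graph :: "'a graph \<Rightarrow> bool" where
  "connected_graph G \<longleftrightarrow> connected_in G (verts G)"

definition gdist :: "'a graph \<Rightarrow> 'a \<Rightarrow> 'a \<Rightarrow> nat" where
  "gdist G x y = (LEAST n. \<exists>xs. walk G xs \<and> hd xs = x \<and> last xs = y \<and> length xs = Suc n)"

definition is_minor :: "'b graph \<Rightarrow> 'a graph \<Rightarrow> bool" where
  "is_minor H G \<longleftrightarrow> (\<exists>B :: 'b \<Rightarrow> 'a set.
     (\<forall>v\<in>verts H. B v \<noteq> {} \<and> B v \<subseteq> verts G \<and> connected_in G (B v)) \<and>
     (\<forall>u\<in>verts H. \<forall>v\<in>verts H. u \<noteq> v \<longrightarrow> B u \<inter> B v = {}) \<and>
     (\<forall>u v. {u, v} \<in> edges H \<longrightarrow> (\<exists>x\<in>B u. \<exists>y\<in>B v. {x, y} \<in> edges G)))"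

text \<open>k-subdivision: each edge e = {a,b} (a < b) becomes the path
  Inl a, Inr (e,1), ..., Inr (e,k-1), Inl b.\<close>
definition sub_node :: "nat \<Rightarrow> 'b::linorder set \<Rightarrow> nat \<Rightarrow> 'b + ('b set \<times> nat)" where
  "sub_node k e i = (if i = 0 then Inl (Min e) else if i = k then Inl (Max e) else Inr (e, i))"

definition subdivision :: "nat \<Rightarrow> 'b::linorder graph \<Rightarrow> ('b + ('b set \<times> nat)) graph" where
  "subdivision k H =
    (Inl ` verts H \<union> {Inr (e, i) | e i. e \<in> edges H \<and> 0 < i \<and> i < k},
     {{sub_node k e i, sub_node k e (Suc i)} | e i. e \<in> edges H \<and> i < k})"

definition expansion :: "'b graph \<Rightarrow> 'a graph \<Rightarrow> ('b \<Rightarrow> 'a) \<Rightarrow> real" where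
  "expansion X Y f = Max {real (gdist Y (f x) (f y)) / real (gdist X x y) | x y.
      x \<in> verts X \<and> y \<in> verts X \<and> x \<noteq> y}"

definition contraction :: "'b graph \<Rightarrow> 'a graph \<Rightarrow> ('b \<Rightarrow> 'a) \<Rightarrow> real" where
  "contraction X Y f = Max {real (gdist X x y) / real (gdist Y (f x) (f y)) | x y.
      x \<in> verts X \<and> y \<in> verts X \<and> x \<noteq> y}"

definition distortion :: "'b graph \<Rightarrow> 'a graph \<Rightarrow> ('b \<Rightarrow> 'a) \<Rightarrow> real" where
  "distortion X Y f = expansion X Y f * contraction X Y f"

end

theory Submission
  imports Defs
begin

lemma walk_CC: "walk G (x # y # zs) \<longleftrightarrow> x \<in> verts G \<and> {x,y} \<in> edges G \<and> walk G (y # zs)"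
  by (auto simp: walk_def nth_Cons split: nat.splits)

lemma walk_single[simp]: "walk G [x] \<longleftrightarrow> x \<in> verts G"
  by (auto simp: walk_def)

lemma walk_verts: "walk G xs \<Longrightarrow> set xs \<subseteq> verts G"
  by (auto simp: walk_def)

lemma walk_append:
  assumes "walk G xs" "walk G ys" "last xs = hd ys"
  shows "walk G (xs @ tl ys) \<and> hd (xs @ tl ys) = hd xs \<and> last (xs @ tl ys) = last ys
     \<and> set (xs @ tl ys) = set xs \<union> set ys"
  using assms
proof (induction xs rule: induct_list012)
  case 1 then show ?case by (simp add: walk_def)
next
  case (2 x)
  then have "ys \<noteq> []" by (simp add: walk_def)
  then have "ys = hd ys # tl ys" by simp
  then obtain y ys' where ys: "ys = y # ys'" by (cases ys) auto
  with 2 have "x = y" by simp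
  then have e: "[x] @ tl ys = ys" using ys by simp
  have "set [x] \<union> set ys = set ys" using ys \<open>x = y\<close> by auto
  moreover have "hd [x] = hd ys" using ys \<open>x = y\<close> by simp
  ultimately show ?case unfolding e using 2(2) by simp
next
  case (3 x y zs)
  have w: "walk G (y # zs)" using 3(3) by (simp add: walk_CC)
  have IH: "walk G ((y # zs) @ tl ys) \<and> hd ((y # zs) @ tl ys) = hd (y # zs) \<and> last ((y # zs) @ tl ys) = last ys
     \<and> set ((y # zs) @ tl ys) = set (y # zs) \<union> set ys" using 3 w by simp
  then show ?case using 3(3) by (auto simp: walk_CC)
qed

lemma walk_rev: "walk G xs \<Longrightarrow> walk G (rev xs)"
proof (induction xs rule: induct_list012)
  case (3 x y zs)
  have w: "walk G (y # zs)" "{x,y} \<in> edges G" "x \<in> verts G" using 3(3) by (simp_all add: walk_CC)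
  have "y \<in> verts G" using walk_verts[OF w(1)] by simp
  then have "walk G [y,x]" using w by (simp add: walk_CC insert_commute)
  moreover have "walk G (rev (y#zs))" using 3 w by simp
  moreover have "last (rev (y#zs)) = hd [y,x]" by (simp add: last_rev)
  ultimately have "walk G (rev (y#zs) @ tl [y,x])" using walk_append by blast
  then show ?case by simp
qed simp_all

lemma walk_take: "walk G xs \<Longrightarrow> 0 < n \<Longrightarrow> walk G (take n xs)"
  by (auto simp: walk_def dest: in_set_takeD)

lemma walk_drop: "walk G xs \<Longrightarrow> n < length xs \<Longrightarrow> walk G (drop n xs)"
  by (auto simp: walk_def dest: in_set_dropD)

lemma walk_sub:
  assumes "walk G xs" "i \<le> j" "j < length xs"
  shows "walk G (drop i (take (Suc j) xs)) \<and> hd (drop i (take (Suc j) xs)) = xs ! i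
    \<and> last (drop i (take (Suc j) xs)) = xs ! j \<and> length (drop i (take (Suc j) xs)) = Suc (j - i)
    \<and> set (drop i (take (Suc j) xs)) \<subseteq> set xs"
proof -
  have t: "walk G (take (Suc j) xs)" using walk_take[OF assms(1), of "Suc j"] by simp
  have il: "i < length (take (Suc j) xs)" using assms by simp
  have w: "walk G (drop i (take (Suc j) xs))" using walk_drop[OF t il] .
  have l: "length (drop i (take (Suc j) xs)) = Suc (j - i)" using assms by simp
  have h: "hd (drop i (take (Suc j) xs)) = xs ! i"
    using il assms by (simp add: hd_drop_conv_nth)
  have "last (drop i (take (Suc j) xs)) = drop i (take (Suc j) xs) ! (j - i)"
    using l by (metis diff_Suc_1 last_conv_nth list.size(3) nat.distinct(1))
  also have "\<dots> = xs ! j" using assms by simp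
  finally have la: "last (drop i (take (Suc j) xs)) = xs ! j" .
  have "set (drop i (take (Suc j) xs)) \<subseteq> set xs"
    by (meson order_trans set_drop_subset set_take_subset)
  then show ?thesis using w l h la by blast
qed

definition reach :: "'a graph \<Rightarrow> 'a \<Rightarrow> 'a \<Rightarrow> bool" where
  "reach G x y \<longleftrightarrow> (\<exists>xs. walk G xs \<and> hd xs = x \<and> last xs = y)"

lemma reach_refl: "x \<in> verts G \<Longrightarrow> reach G x x"
  unfolding reach_def by (rule exI[of _ "[x]"]) simp

lemma reach_sym: "reach G x y \<Longrightarrow> reach G y x"
  proof -
  assume "reach G x y"
  then obtain xs where xs: "walk G xs" "hd xs = x" "last xs = y" unfolding reach_def by blast
  then have "xs \<noteq> []" by (simp add: walk_def)
  then show ?thesis unfolding reach_def using xs walk_rev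
    by (intro exI[of _ "rev xs"]) (simp add: hd_rev last_rev)
qed

lemma reach_trans: "reach G x y \<Longrightarrow> reach G y z \<Longrightarrow> reach G x z"
  proof -
  assume "reach G x y" "reach G y z"
  then obtain xs ys where xs: "walk G xs" "hd xs = x" "last xs = y"
    and ys: "walk G ys" "hd ys = y" "last ys = z" unfolding reach_def by blast
  have "last xs = hd ys" using xs ys by simp
  from walk_append[OF xs(1) ys(1) this] show ?thesis unfolding reach_def using xs ys
    by (intro exI[of _ "xs @ tl ys"]) simp
qed

lemma reach_edge: "{x,y} \<in> edges G \<Longrightarrow> x \<in> verts G \<Longrightarrow> y \<in> verts G \<Longrightarrow> reach G x y"
  unfolding reach_def by (rule exI[of _ "[x,y]"]) (simp add: walk_CC)

lemma gdist_le: "walk G xs \<Longrightarrow> hd xs = x \<Longrightarrow> last xs = y \<Longrightarrow> gdist G x y \<le> length xs - 1"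
  unfolding gdist_def
  by (rule Least_le) (auto simp: walk_def intro!: exI[of _ xs])

lemma gdist_wit: "reach G x y \<Longrightarrow> \<exists>xs. walk G xs \<and> hd xs = x \<and> last xs = y \<and> length xs = Suc (gdist G x y)"
proof -
  assume "reach G x y"
  then obtain xs where xs: "walk G xs" "hd xs = x" "last xs = y" unfolding reach_def by blast
  then have "xs \<noteq> []" by (simp add: walk_def)
  then have "\<exists>n xs. walk G xs \<and> hd xs = x \<and> last xs = y \<and> length xs = Suc n"
    using xs by (intro exI[of _ "length xs - 1"] exI[of _ xs]) auto
  then show ?thesis unfolding gdist_def by (rule LeastI_ex)
qed

lemma gdist_refl: "x \<in> verts G \<Longrightarrow> gdist G x x = 0"
  using gdist_le[of G "[x]" x x] by simp

lemma gdist_pos: "reach G x y \<Longrightarrow> x \<noteq> y \<Longrightarrow> gdist G x y \<ge> 1"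
proof (rule ccontr)
  assume "reach G x y" "x \<noteq> y" "\<not> gdist G x y \<ge> 1"
  then obtain xs where "walk G xs" "hd xs = x" "last xs = y" "length xs = Suc 0"
    using gdist_wit by fastforce
  then show False using \<open>x \<noteq> y\<close> by (cases xs) auto
qed

lemma gdist_sym_le: "reach G x y \<Longrightarrow> gdist G y x \<le> gdist G x y"
proof -
  assume a: "reach G x y"
  from gdist_wit[OF a] obtain xs where xs: "walk G xs" "hd xs = x" "last xs = y" "length xs = Suc (gdist G x y)"
    by blast
  have "xs \<noteq> []" using xs(4) by auto
  then have "hd (rev xs) = y" "last (rev xs) = x" using xs by (simp_all add: hd_rev last_rev)
  moreover have "walk G (rev xs)" using walk_rev xs(1) by blast
  ultimately have "gdist G y x \<le> length (rev xs) - 1" using gdist_le[of G "rev xs" y x] by simp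
  then show ?thesis using xs(4) by simp
qed

lemma gdist_sym: "reach G x y \<Longrightarrow> gdist G y x = gdist G x y"
proof -
  assume a: "reach G x y"
  show ?thesis using gdist_sym_le[OF a] gdist_sym_le[OF reach_sym[OF a]] by simp
qed

lemma gdist_tri: "reach G x y \<Longrightarrow> reach G y z \<Longrightarrow> gdist G x z \<le> gdist G x y + gdist G y z"
proof -
  assume a: "reach G x y" "reach G y z"
  from gdist_wit[OF a(1)] obtain xs where xs: "walk G xs" "hd xs = x" "last xs = y" "length xs = Suc (gdist G x y)"
    by blast
  from gdist_wit[OF a(2)] obtain ys where ys: "walk G ys" "hd ys = y" "last ys = z" "length ys = Suc (gdist G y z)"
    by blast
  have "walk G (xs @ tl ys) \<and> hd (xs @ tl ys) = x \<and> last (xs @ tl ys) = z"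
    using walk_append[OF xs(1) ys(1)] xs ys by simp
  then show ?thesis using gdist_le[of G "xs @ tl ys" x z] xs ys by simp
qed

lemma gdist_prefix: "walk G xs \<Longrightarrow> t < length xs \<Longrightarrow> gdist G (hd xs) (xs ! t) \<le> t"
  using walk_sub[of G xs 0 t] gdist_le[of G "take (Suc t) xs" "hd xs" "xs ! t"]
  by (simp add: hd_conv_nth walk_def)

lemma connected_walk: "walk G xs \<Longrightarrow> connected_in G (set xs)"
  unfolding connected_in_def
proof (intro ballI)
  fix x y assume w: "walk G xs" and x: "x \<in> set xs" and y: "y \<in> set xs"
  obtain i j where i: "i < length xs" "xs ! i = x" and j: "j < length xs" "xs ! j = y"
    using x y by (metis in_set_conv_nth)
  show "\<exists>ys. walk G ys \<and> set ys \<subseteq> set xs \<and> hd ys = x \<and> last ys = y"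
  proof (cases "i \<le> j")
    case True
    then show ?thesis using walk_sub[OF w True j(1)] i j by blast
  next
    case False
    then have "j \<le> i" by simp
    from walk_sub[OF w this i(1)] show ?thesis using i j
      by (intro exI[of _ "rev (drop j (take (Suc i) xs))"])
        (auto simp: walk_rev hd_rev last_rev)
  qed
qed

lemma connected_Union:
  assumes "\<And>c. c \<in> C \<Longrightarrow> connected_in G (X c) \<and> z \<in> X c"
  shows "connected_in G (\<Union>c\<in>C. X c)"
  unfolding connected_in_def
proof (intro ballI)
  fix x y assume "x \<in> (\<Union>c\<in>C. X c)" "y \<in> (\<Union>c\<in>C. X c)"
  then obtain c d where c: "c \<in> C" "x \<in> X c" and d: "d \<in> C" "y \<in> X d" by blast
  obtain xs where xs: "walk G xs" "set xs \<subseteq> X c" "hd xs = x" "last xs = z"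
    using assms[OF c(1)] c(2) unfolding connected_in_def by blast
  obtain ys where ys: "walk G ys" "set ys \<subseteq> X d" "hd ys = z" "last ys = y"
    using assms[OF d(1)] d(2) unfolding connected_in_def by blast
  have "last xs = hd ys" using xs ys by simp
  note A = walk_append[OF xs(1) ys(1) this]
  have a1: "walk G (xs @ tl ys)" and a2: "hd (xs @ tl ys) = hd xs" and a3: "last (xs @ tl ys) = last ys"
    and a4: "set (xs @ tl ys) = set xs \<union> set ys" using A by blast+
  have S: "set (xs @ tl ys) \<subseteq> (\<Union>c\<in>C. X c)" unfolding a4 using xs(2) ys(2) c(1) d(1) by blast
  show "\<exists>zs. walk G zs \<and> set zs \<subseteq> (\<Union>c\<in>C. X c) \<and> hd zs = x \<and> last zs = y"
    apply (rule exI[of _ "xs @ tl ys"])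
    using a1 S a2 a3 xs(3) ys(4) by simp
qed

lemma first_hit:
  assumes w: "walk G xs" and h: "hd xs \<notin> S" and l: "last xs \<in> S"
  shows "\<exists>t. 0 < t \<and> t < length xs \<and> set (take t xs) \<inter> S = {} \<and> xs ! t \<in> S
     \<and> {xs ! (t - 1), xs ! t} \<in> edges G \<and> walk G (take t xs) \<and> hd (take t xs) = hd xs
     \<and> xs ! (t - 1) \<in> set (take t xs)"
proof -
  have ne: "xs \<noteq> []" using w by (simp add: walk_def)
  define P where "P t \<longleftrightarrow> t < length xs \<and> xs ! t \<in> S" for t
  have ex: "P (length xs - 1)" using ne l by (simp add: P_def last_conv_nth)
  define t where "t = (LEAST t. P t)"
  have Pt: "P t" unfolding t_def using ex by (rule LeastI)
  have min: "\<And>s. s < t \<Longrightarrow> \<not> P s" unfolding t_def using not_less_Least by blast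
  have t0: "t \<noteq> 0"
  proof
    assume "t = 0"
    then show False using Pt h ne by (simp add: P_def hd_conv_nth)
  qed
  have tl: "t < length xs" using Pt by (simp add: P_def)
  have disj: "set (take t xs) \<inter> S = {}"
  proof (rule ccontr)
    assume "set (take t xs) \<inter> S \<noteq> {}"
    then obtain s where "s < length (take t xs)" "take t xs ! s \<in> S"
      by (metis disjoint_iff in_set_conv_nth)
    then show False using min[of s] tl by (simp add: P_def)
  qed
  have e: "{xs ! (t - 1), xs ! t} \<in> edges G"
    using w t0 tl unfolding walk_def by (metis Suc_pred' not_gr_zero)
  have "xs ! (t - 1) \<in> set (take t xs)" using t0 tl
    by (metis diff_less in_set_conv_nth length_take min.absorb4 nth_take zero_less_one not_gr_zero)
  moreover have "hd (take t xs) = hd xs" using t0 ne by simp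
  ultimately show ?thesis using t0 tl disj e Pt walk_take[OF w, of t] by (auto simp: P_def)
qed

lemma potential_walk:
  fixes phi :: "'a \<Rightarrow> int"
  assumes L: "\<And>a b. {a,b} \<in> edges X \<Longrightarrow> phi a - phi b \<le> 1"
  shows "walk X xs \<Longrightarrow> phi (last xs) - phi (hd xs) \<le> int (length xs) - 1"
proof (induction xs rule: induct_list012)
  case (3 x y zs)
  have w: "walk X (y # zs)" "{x,y} \<in> edges X" using 3(3) by (simp_all add: walk_CC)
  have "{y,x} \<in> edges X" using w(2) by (simp add: insert_commute)
  then have "phi y - phi x \<le> 1" using L by blast
  moreover have "phi (last (y # zs)) - phi (hd (y # zs)) \<le> int (length (y # zs)) - 1" using 3(2) w(1) by blast
  ultimately show ?case by simp
qed (simp_all add: walk_def)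

lemma potential_gdist:
  fixes phi :: "'a \<Rightarrow> int"
  assumes L: "\<And>a b. {a,b} \<in> edges X \<Longrightarrow> phi a - phi b \<le> 1"
  and r: "reach X x y"
  shows "phi y - phi x \<le> int (gdist X x y)"
proof -
  from gdist_wit[OF r] obtain xs where xs: "walk X xs" "hd xs = x" "last xs = y" "length xs = Suc (gdist X x y)"
    by blast
  from potential_walk[of X phi, OF L xs(1)] have "phi (last xs) - phi (hd xs) \<le> int (length xs) - 1" by blast
  then show ?thesis using xs(2-4) by simp
qed

section \<open>Subdivision facts\<close>

lemma edge_H:
  assumes "fin_graph H" "e \<in> edges H"
  shows "card e = 2" "e \<subseteq> verts H" "finite e" "Min e \<in> e" "Max e \<in> e" "Min e < Max e"
    "e = {Min e, Max e}"
proof -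
  show c: "card e = 2" and s: "e \<subseteq> verts H" using assms by (auto simp: fin_graph_def)
  then obtain a b where ab: "e = {a,b}" "a \<noteq> b" by (meson card_2_iff)
  show "finite e" using ab by simp
  show "Min e \<in> e" using ab by (intro Min_in) simp_all
  show "Max e \<in> e" using ab by (intro Max_in) simp_all
  show "Min e < Max e" using ab by (cases "a < b") (auto simp: min_def max_def)
  show "e = {Min e, Max e}" using ab by (cases "a < b") (auto simp: min_def max_def)
qed

lemma verts_sub: "verts (subdivision k H) =
    Inl ` verts H \<union> {Inr (e, i) | e i. e \<in> edges H \<and> 0 < i \<and> i < k}"
  by (simp add: subdivision_def verts_def)

lemma edges_sub: "edges (subdivision k H) =
    {{sub_node k e i, sub_node k e (Suc i)} | e i. e \<in> edges H \<and> i < k}"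
  by (simp add: subdivision_def edges_def)

lemma sub_node_0[simp]: "sub_node k e 0 = Inl (Min e)"
  by (simp add: sub_node_def)

lemma sub_node_k[simp]: "1 \<le> k \<Longrightarrow> sub_node k e k = Inl (Max e)"
  by (simp add: sub_node_def)

lemma sub_node_verts:
  assumes "fin_graph H" "e \<in> edges H" "j \<le> k"
  shows "sub_node k e j \<in> verts (subdivision k H)"
proof -
  have "Min e \<in> verts H" "Max e \<in> verts H" using edge_H[OF assms(1,2)] by auto
  then show ?thesis using assms by (auto simp: sub_node_def verts_sub)
qed

lemma sub_node_edge:
  assumes "e \<in> edges H" "j < k"
  shows "{sub_node k e j, sub_node k e (Suc j)} \<in> edges (subdivision k H)"
  using assms unfolding edges_sub by blast

lemma sub_node_inj:
  assumes "fin_graph H" "e \<in> edges H" "i \<le> k" "j \<le> k" "i \<noteq> j"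
  shows "sub_node k e i \<noteq> sub_node k e j"
  using assms edge_H(6)[OF assms(1,2)] by (auto simp: sub_node_def)

lemma reach_along:
  assumes "fin_graph H" "e \<in> edges H" "j \<le> k"
  shows "reach (subdivision k H) (sub_node k e 0) (sub_node k e j)"
  using assms(3)
proof (induction j)
  case 0
  show ?case using sub_node_verts[OF assms(1,2), of 0] by (intro reach_refl) simp
next
  case (Suc j)
  have "reach (subdivision k H) (sub_node k e j) (sub_node k e (Suc j))"
    using sub_node_edge[OF assms(2), of j k] Suc(2) sub_node_verts[OF assms(1,2)]
    by (intro reach_edge) auto
  then show ?case using Suc reach_trans by simp
qed

lemma reach_Inl_edge:
  assumes "fin_graph H" "k \<ge> 1" "{a,b} \<in> edges H"
  shows "reach (subdivision k H) (Inl a) (Inl b)"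
proof -
  let ?e = "{a,b}"
  have r: "reach (subdivision k H) (Inl (Min ?e)) (Inl (Max ?e))"
    using reach_along[OF assms(1,3), of k k] assms(2) by simp
  have "?e = {Min ?e, Max ?e}" "Min ?e < Max ?e" using edge_H[OF assms(1,3)] by simp_all
  then have "(a = Min ?e \<and> b = Max ?e) \<or> (a = Max ?e \<and> b = Min ?e)"
    by (metis doubleton_eq_iff)
  then show ?thesis using r reach_sym by metis
qed

lemma reach_Inl:
  assumes "fin_graph H" "k \<ge> 1" "walk H ys"
  shows "reach (subdivision k H) (Inl (hd ys)) (Inl (last ys))"
  using assms(3)
proof (induction ys rule: induct_list012)
  case (2 x)
  have "Inl x \<in> verts (subdivision k H)" using 2 by (simp add: verts_sub)
  then show ?case by (simp add: reach_refl)
next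
  case (3 x y zs)
  have w: "walk H (y # zs)" "{x,y} \<in> edges H" using 3(3) by (simp_all add: walk_CC)
  have "reach (subdivision k H) (Inl x) (Inl y)" using reach_Inl_edge[OF assms(1,2) w(2)] .
  moreover have "reach (subdivision k H) (Inl y) (Inl (last (y#zs)))" using 3(2)[OF w(1)] by simp
  ultimately have "reach (subdivision k H) (Inl x) (Inl (last (y#zs)))" by (rule reach_trans)
  then show ?case by simp
qed (simp add: walk_def)

lemma reach_sub_nodes:
  assumes "fin_graph H" "connected_graph H" "k \<ge> 1" "e \<in> edges H" "e' \<in> edges H" "i \<le> k" "j \<le> k"
  shows "reach (subdivision k H) (sub_node k e i) (sub_node k e' j)"
proof -
  have m: "Min e \<in> verts H" "Min e' \<in> verts H" using edge_H[OF assms(1,4)] edge_H[OF assms(1,5)] by auto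
  obtain ys where ys: "walk H ys" "hd ys = Min e" "last ys = Min e'"
    using assms(2) m unfolding connected_graph_def connected_in_def by blast
  have "reach (subdivision k H) (Inl (Min e)) (Inl (Min e'))" using reach_Inl[OF assms(1,3) ys(1)] ys by simp
  moreover have "reach (subdivision k H) (sub_node k e i) (Inl (Min e))"
    using reach_sym[OF reach_along[OF assms(1,4,6)]] by simp
  moreover have "reach (subdivision k H) (Inl (Min e')) (sub_node k e' j)"
    using reach_along[OF assms(1,5,7)] by simp
  ultimately show ?thesis using reach_trans by metis
qed

definition nu :: "nat \<Rightarrow> 'b::linorder set \<Rightarrow> nat \<Rightarrow> 'b \<Rightarrow> int" where
  "nu k e i v = (if v = Min e then int i else if v = Max e then int k - int i else int k)"

definition psi :: "nat \<Rightarrow> 'b::linorder set \<Rightarrow> nat \<Rightarrow> 'b set \<Rightarrow> nat \<Rightarrow> int" where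
  "psi k e i e' j = (if e' = e then \<bar>int i - int j\<bar>
     else min (int k) (min (nu k e i (Min e') + int j) (nu k e i (Max e') + int k - int j)))"

definition phi :: "nat \<Rightarrow> 'b::linorder set \<Rightarrow> nat \<Rightarrow> 'b + ('b set \<times> nat) \<Rightarrow> int" where
  "phi k e i z = (case z of Inl v \<Rightarrow> nu k e i v | Inr p \<Rightarrow> psi k e i (fst p) (snd p))"

lemma nu_bounds: "i \<le> k \<Longrightarrow> 0 \<le> nu k e i v \<and> nu k e i v \<le> int k"
  by (auto simp: nu_def)

lemma phi_sub:
  assumes "fin_graph H" "e \<in> edges H" "e' \<in> edges H" "i \<le> k" "j \<le> k" "1 \<le> k"
  shows "phi k e i (sub_node k e' j) = psi k e i e' j"
proof -
  have ne: "Min e \<noteq> Max e" using edge_H(6)[OF assms(1,2)] by simp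
  have b1: "0 \<le> nu k e i v" "nu k e i v \<le> int k" for v using nu_bounds[OF assms(4)] by auto
  consider "j = 0" | "j = k" | "0 < j \<and> j < k" using assms(5) by linarith
  then show ?thesis
  proof cases
    case 1
    then show ?thesis using b1[of "Min e'"] b1[of "Max e'"]
      by (auto simp: phi_def psi_def nu_def)
  next
    case 2
    then have "j \<noteq> 0" using assms(6) by simp
    then show ?thesis using 2 assms(6) ne b1[of "Min e'"] b1[of "Max e'"] assms(4)
      by (auto simp: phi_def psi_def nu_def sub_node_def)
  next
    case 3
    then show ?thesis by (simp add: phi_def sub_node_def)
  qed
qed

lemma psi_lip: "\<bar>psi k e i e' j - psi k e i e' (Suc j)\<bar> \<le> 1"
  unfolding psi_def by (auto simp: min_def)

lemma phi_lip:
  assumes "fin_graph H" "e \<in> edges H" "i \<le> k" "1 \<le> k"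
  shows "{a,b} \<in> edges (subdivision k H) \<Longrightarrow> phi k e i a - phi k e i b \<le> 1"
proof -
  assume "{a,b} \<in> edges (subdivision k H)"
  then obtain e' j where ej: "e' \<in> edges H" "j < k" "{a,b} = {sub_node k e' j, sub_node k e' (Suc j)}"
    unfolding edges_sub by blast
  have p1: "phi k e i (sub_node k e' j) = psi k e i e' j"
    using phi_sub[OF assms(1,2) ej(1) assms(3), of j] ej(2) assms(4) by simp
  have p2: "phi k e i (sub_node k e' (Suc j)) = psi k e i e' (Suc j)"
    using phi_sub[OF assms(1,2) ej(1) assms(3), of "Suc j"] ej(2) assms(4) by simp
  have "(a = sub_node k e' j \<and> b = sub_node k e' (Suc j)) \<or> (a = sub_node k e' (Suc j) \<and> b = sub_node k e' j)"
    using ej(3) by (simp add: doubleton_eq_iff)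
  then show ?thesis using psi_lip[of k e i e' j] p1 p2 by auto
qed

lemma lower_same:
  assumes "fin_graph H" "connected_graph H" "1 \<le> k" "e \<in> edges H" "j \<le> k"
  shows "j \<le> gdist (subdivision k H) (sub_node k e 0) (sub_node k e j)"
proof -
  have r: "reach (subdivision k H) (sub_node k e 0) (sub_node k e j)"
    using reach_sub_nodes[OF assms(1-4,4) _ assms(5), of 0] by simp
  have L: "\<And>a b. {a,b} \<in> edges (subdivision k H) \<Longrightarrow> phi k e 0 a - phi k e 0 b \<le> 1"
    using phi_lip[OF assms(1,4), of 0 k] assms(3) by simp
  have "phi k e 0 (sub_node k e j) - phi k e 0 (sub_node k e 0) \<le> int (gdist (subdivision k H) (sub_node k e 0) (sub_node k e j))"
    using potential_gdist[OF L r] .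
  moreover have "phi k e 0 (sub_node k e j) = int j" using phi_sub[OF assms(1,4,4), where i=0 and j=j and k=k] assms by (simp add: psi_def)
  moreover have "phi k e 0 (sub_node k e 0) = 0" using phi_sub[OF assms(1,4,4), where i=0 and j=0 and k=k] assms by (simp add: psi_def)
  ultimately show ?thesis by simp
qed

definition sd :: "nat \<Rightarrow> 'b::linorder set \<Rightarrow> 'b \<Rightarrow> nat \<Rightarrow> nat" where
  "sd k e u i = (if u = Min e then i else k - i)"

lemma lower_diff:
  assumes "fin_graph H" "connected_graph H" "1 \<le> k" "e \<in> edges H" "e' \<in> edges H" "e \<noteq> e'"
    "u \<in> e" "w \<in> e'" "u \<noteq> w" "i \<le> k" "j \<le> k" "sd k e u i \<le> L" "sd k e' w j \<le> L" "L \<le> k"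
  shows "int k - int L \<le> int (gdist (subdivision k H) (sub_node k e i) (sub_node k e' j))"
proof -
  have r: "reach (subdivision k H) (sub_node k e i) (sub_node k e' j)"
    using reach_sub_nodes[OF assms(1-5,10,11)] .
  have L: "\<And>a b. {a,b} \<in> edges (subdivision k H) \<Longrightarrow> phi k e i a - phi k e i b \<le> 1"
    using phi_lip[OF assms(1,4,10,3)] by blast
  have g: "phi k e i (sub_node k e' j) - phi k e i (sub_node k e i) \<le> int (gdist (subdivision k H) (sub_node k e i) (sub_node k e' j))"
    using potential_gdist[OF L r] .
  have z: "phi k e i (sub_node k e i) = 0" using phi_sub[OF assms(1,4,4,10,10,3)] by (simp add: psi_def)
  have p: "phi k e i (sub_node k e' j) = min (int k) (min (nu k e i (Min e') + int j) (nu k e i (Max e') + int k - int j))"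
    using phi_sub[OF assms(1,4,5,10,11,3)] assms(6) by (simp add: psi_def)
  have m: "int k - int L \<le> min (int k) (min (nu k e i (Min e') + int j) (nu k e i (Max e') + int k - int j))"
  proof -
    have eu: "e = {Min e, Max e}" "Min e \<noteq> Max e" using edge_H[OF assms(1,4)] by auto
    have ew: "e' = {Min e', Max e'}" "Min e' \<noteq> Max e'" using edge_H[OF assms(1,5)] by auto
    have nuw: "int k - int L \<le> nu k e i w"
    proof -
      have "u = Min e \<or> u = Max e" using assms(7) eu by blast
      then show ?thesis using assms(9,10,12,14) eu(2) by (auto simp: nu_def sd_def)
    qed
    have b: "0 \<le> nu k e i v" for v using nu_bounds[OF assms(10)] by auto
    have "w = Min e' \<or> w = Max e'" using assms(8) ew by blast
    then show ?thesis
    proof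
      assume w: "w = Min e'"
      then have "j \<le> L" using assms(13) by (simp add: sd_def)
      then show ?thesis using nuw w b[of "Max e'"] assms(14) by simp
    next
      assume w: "w = Max e'"
      then have "k - j \<le> L" using assms(13) ew(2) by (simp add: sd_def)
      then show ?thesis using nuw w b[of "Min e'"] assms(11,14) by simp
    qed
  qed
  have "int k - int L \<le> phi k e i (sub_node k e' j)" unfolding p by (rule m)
  then show ?thesis using g z by linarith
qed

lemma concat_walks:
  assumes "\<And>i. a \<le> i \<Longrightarrow> i < a + n \<Longrightarrow> walk G (w i) \<and> hd (w i) = g i \<and> last (w i) = g (Suc i)"
    and "1 \<le> n"
  shows "\<exists>xs. walk G xs \<and> hd xs = g a \<and> last xs = g (a + n) \<and> set xs = (\<Union>i\<in>{a..<a+n}. set (w i))"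
  using assms
proof (induction n)
  case 0 then show ?case by simp
next
  case (Suc n)
  show ?case
  proof (cases "n = 0")
    case True
    then show ?thesis using Suc(2)[of a] by (intro exI[of _ "w a"]) simp
  next
    case False
    then obtain xs where xs: "walk G xs" "hd xs = g a" "last xs = g (a + n)" "set xs = (\<Union>i\<in>{a..<a+n}. set (w i))"
      using Suc by fastforce
    have wn: "walk G (w (a+n))" "hd (w (a+n)) = g (a+n)" "last (w (a+n)) = g (Suc (a+n))"
      using Suc(2)[of "a+n"] by simp_all
    have "last xs = hd (w (a+n))" using xs(3) wn(2) by simp
    note A = walk_append[OF xs(1) wn(1) this]
    have a1: "walk G (xs @ tl (w (a+n)))" and a2: "hd (xs @ tl (w (a+n))) = hd xs"
      and a3: "last (xs @ tl (w (a+n))) = last (w (a+n))"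
      and a4: "set (xs @ tl (w (a+n))) = set xs \<union> set (w (a+n))" using A by blast+
    have "{a..<a + Suc n} = insert (a+n) {a..<a+n}" by auto
    then have "set (xs @ tl (w (a+n))) = (\<Union>i\<in>{a..<a+Suc n}. set (w i))" unfolding a4 xs(4) by auto
    then show ?thesis using a1 a2 a3 xs(2) wn(3) by (intro exI[of _ "xs @ tl (w (a+n))"]) simp
  qed
qed

lemma connected_single: "x \<in> verts G \<Longrightarrow> connected_in G {x}"
  unfolding connected_in_def by (auto intro!: exI[of _ "[x]"])

lemma all_verts_in_edges:
  assumes "fin_graph H" "connected_graph H" "u \<in> verts H" "\<not> (\<exists>e\<in>edges H. u \<in> e)"
  shows "verts H = {u}" "edges H = {}"
proof -
  show v: "verts H = {u}"
  proof (rule ccontr)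
    assume "verts H \<noteq> {u}"
    then obtain v where v: "v \<in> verts H" "v \<noteq> u" using assms(3) by blast
    obtain ys where ys: "walk H ys" "hd ys = u" "last ys = v"
      using assms(2,3) v(1) unfolding connected_graph_def connected_in_def by blast
    have "ys \<noteq> []" using ys(1) by (simp add: walk_def)
    then have ys1: "ys = u # tl ys" using ys(2) by (metis list.collapse)
    have "tl ys \<noteq> []"
    proof
      assume "tl ys = []"
      then have "last ys = u" using ys1 by (metis last_ConsL)
      then show False using ys(3) v(2) by simp
    qed
    then obtain zs where "ys = u # zs" "zs \<noteq> []" using ys1 by blast
    then obtain z zs' where "ys = u # z # zs'" by (cases zs) auto
    then have "{u, z} \<in> edges H" using ys(1) by (simp add: walk_CC)
    then show False using assms(4) by blast
  qed
  show "edges H = {}"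
  proof (rule ccontr)
    assume "edges H \<noteq> {}"
    then obtain e where e: "e \<in> edges H" by blast
    have "e \<subseteq> {u}" "card e = 2" using assms(1) e v by (auto simp: fin_graph_def)
    then show False using card_mono[of "{u}" e] by simp
  qed
qed

lemma minor_construct:
  fixes G :: "'a graph" and H :: "'b::linorder graph" and k :: nat
    and f :: "'b + ('b set \<times> nat) \<Rightarrow> 'a" and \<alpha> \<beta> :: real
  assumes fH: "fin_graph H" and cG: "connected_graph G" and cH: "connected_graph H"
    and k1: "k \<ge> 1"
    and inj: "inj_on f (verts (subdivision k H))"
    and fV: "f ` verts (subdivision k H) \<subseteq> verts G"
    and hv: "\<forall>u\<in>verts H. \<exists>e\<in>edges H. u \<in> e"
    and P1: "\<And>e i. e \<in> edges H \<Longrightarrow> i < k \<Longrightarrow>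
       real (gdist G (f (sub_node k e i)) (f (sub_node k e (Suc i)))) \<le> \<alpha>"
    and P2: "\<And>p q. p \<in> verts (subdivision k H) \<Longrightarrow> q \<in> verts (subdivision k H) \<Longrightarrow> p \<noteq> q \<Longrightarrow>
       real (gdist (subdivision k H) p q) \<le> \<beta> * real (gdist G (f p) (f q))"
    and a0: "\<alpha> \<ge> 0" and b0: "\<beta> \<ge> 0"
    and small: "6 * (\<alpha> * \<beta>) + 3 < real k"
  shows "is_minor H G"
proof -
  define J where "J = subdivision k H"
  define D where "D = \<alpha> * \<beta>"
  define m where "m = k div 2"
  define p where "p (e::'b set) i = sub_node k e i" for e i
  have D0: "D \<ge> 0" using a0 b0 by (simp add: D_def)
  have m1: "1 \<le> m" and mk: "m < k" and mm: "m \<le> k - m" and mD: "2 * D < real m"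
    using small D0 unfolding m_def D_def by linarith+
  have rG: "reach G x y" if "x \<in> verts G" "y \<in> verts G" for x y
    using cG that unfolding connected_graph_def connected_in_def reach_def by blast
  have pV: "p e i \<in> verts J" if "e \<in> edges H" "i \<le> k" for e i
    using sub_node_verts[OF fH that] by (simp add: p_def J_def)
  have fpV: "f (p e i) \<in> verts G" if "e \<in> edges H" "i \<le> k" for e i
    using fV pV[OF that] by (auto simp: J_def)
  define \<omega> where "\<omega> e i = (SOME xs. walk G xs \<and> hd xs = f (p e i) \<and> last xs = f (p e (Suc i))
      \<and> length xs = Suc (gdist G (f (p e i)) (f (p e (Suc i)))))" for e i
  have om: "walk G (\<omega> e i) \<and> hd (\<omega> e i) = f (p e i) \<and> last (\<omega> e i) = f (p e (Suc i))
      \<and> length (\<omega> e i) = Suc (gdist G (f (p e i)) (f (p e (Suc i))))"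
    if "e \<in> edges H" "i < k" for e i
  proof -
    have "reach G (f (p e i)) (f (p e (Suc i)))" using rG fpV that by simp
    from gdist_wit[OF this] show ?thesis unfolding \<omega>_def by (rule someI_ex)
  qed
  have segd: "real (gdist G (f (p e i)) x) \<le> \<alpha>" if a: "e \<in> edges H" "i < k" "x \<in> set (\<omega> e i)" for e i x
  proof -
    obtain t where t: "t < length (\<omega> e i)" "\<omega> e i ! t = x" using a(3) by (metis in_set_conv_nth)
    have "gdist G (hd (\<omega> e i)) (\<omega> e i ! t) \<le> t" using gdist_prefix om[OF a(1,2)] t(1) by blast
    then have "gdist G (f (p e i)) x \<le> gdist G (f (p e i)) (f (p e (Suc i)))"
      using om[OF a(1,2)] t by simp
    then show ?thesis using P1[OF a(1,2)] unfolding p_def by linarith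
  qed
  have segV: "set (\<omega> e i) \<subseteq> verts G" if "e \<in> edges H" "i < k" for e i
    using om[OF that] walk_verts by blast
  define Bp where "Bp e = (\<Union>i\<in>{m..<k}. set (\<omega> e i))" for e
  have Bprop: "connected_in G (Bp e) \<and> f (p e k) \<in> Bp e \<and> f (p e m) \<in> Bp e" if e: "e \<in> edges H" for e
  proof -
    have "\<exists>xs. walk G xs \<and> hd xs = (\<lambda>i. f (p e i)) m \<and> last xs = (\<lambda>i. f (p e i)) (m + (k - m))
        \<and> set xs = (\<Union>i\<in>{m..<m + (k - m)}. set (\<omega> e i))"
      using om[OF e] mk by (intro concat_walks) auto
    then obtain xs where xs: "walk G xs" "hd xs = f (p e m)" "last xs = f (p e k)" "set xs = Bp e"
      using mk unfolding Bp_def by auto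
    have "xs \<noteq> []" using xs(1) by (simp add: walk_def)
    then show ?thesis using connected_walk[OF xs(1)] xs by (metis hd_in_set last_in_set)
  qed
  have Aex: "\<exists>A. A \<subseteq> (\<Union>i\<in>{0..<m}. set (\<omega> e i)) \<and> f (p e 0) \<in> A \<and> connected_in G A \<and> A \<inter> Bp e = {}
     \<and> (\<exists>x\<in>A. \<exists>y\<in>Bp e. {x,y} \<in> edges G)" if e: "e \<in> edges H" for e
  proof -
    have "\<exists>xs. walk G xs \<and> hd xs = (\<lambda>i. f (p e i)) 0 \<and> last xs = (\<lambda>i. f (p e i)) (0 + m)
        \<and> set xs = (\<Union>i\<in>{0..<0 + m}. set (\<omega> e i))"
      using om[OF e] mk m1 by (intro concat_walks) auto
    then obtain xs where xs: "walk G xs" "hd xs = f (p e 0)" "last xs = f (p e m)"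
       "set xs = (\<Union>i\<in>{0..<m}. set (\<omega> e i))"
      by auto
    have hnot: "hd xs \<notin> Bp e"
    proof
      assume "hd xs \<in> Bp e"
      then obtain i where i: "m \<le> i" "i < k" "f (p e 0) \<in> set (\<omega> e i)" using xs(2) unfolding Bp_def by auto
      have d1: "real (gdist G (f (p e i)) (f (p e 0))) \<le> \<alpha>" using segd[OF e i(2,3)] .
      have ne: "p e i \<noteq> p e 0" using sub_node_inj[OF fH e, where i=i and j=0 and k=k] i m1 unfolding p_def by simp
      have "real (gdist J (p e i) (p e 0)) \<le> \<beta> * real (gdist G (f (p e i)) (f (p e 0)))"
        using P2[of "p e i" "p e 0"] pV[OF e] i ne unfolding J_def by simp
      also have "\<dots> \<le> \<beta> * \<alpha>" by (rule mult_left_mono[OF d1 b0])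
      finally have d2: "real (gdist J (p e i) (p e 0)) \<le> D" unfolding D_def by (simp add: mult.commute)
      have "i \<le> gdist J (p e 0) (p e i)"
        using lower_same[OF fH cH k1 e, of i] i unfolding J_def p_def by simp
      moreover have "gdist J (p e i) (p e 0) = gdist J (p e 0) (p e i)"
        using gdist_sym[OF reach_sub_nodes[OF fH cH k1 e e, of 0 i]] i unfolding J_def p_def by simp
      ultimately have "real m \<le> D" using d2 i(1) by linarith
      then show False using mD D0 by linarith
    qed
    have lin: "last xs \<in> Bp e" using xs(3) Bprop[OF e] by simp
    from first_hit[OF xs(1) hnot lin] obtain t where t: "0 < t" "t < length xs" "set (take t xs) \<inter> Bp e = {}"
      "xs ! t \<in> Bp e" "{xs ! (t - 1), xs ! t} \<in> edges G" "walk G (take t xs)" "hd (take t xs) = hd xs"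
      "xs ! (t - 1) \<in> set (take t xs)" by blast
    have "take t xs \<noteq> []" using t(1,2) by (cases xs) auto
    then have "f (p e 0) \<in> set (take t xs)" using t(7) xs(2) by (metis hd_in_set)
    moreover have "set (take t xs) \<subseteq> (\<Union>i\<in>{0..<m}. set (\<omega> e i))" using xs(4) set_take_subset by metis
    ultimately show ?thesis using connected_walk[OF t(6)] t(3,4,5,8) by blast
  qed
  define Ap where "Ap e = (SOME A. A \<subseteq> (\<Union>i\<in>{0..<m}. set (\<omega> e i)) \<and> f (p e 0) \<in> A \<and> connected_in G A \<and> A \<inter> Bp e = {}
     \<and> (\<exists>x\<in>A. \<exists>y\<in>Bp e. {x,y} \<in> edges G))" for e
  have Aprop: "Ap e \<subseteq> (\<Union>i\<in>{0..<m}. set (\<omega> e i)) \<and> f (p e 0) \<in> Ap e \<and> connected_in G (Ap e) \<and> Ap e \<inter> Bp e = {}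
     \<and> (\<exists>x\<in>Ap e. \<exists>y\<in>Bp e. {x,y} \<in> edges G)" if e: "e \<in> edges H" for e
    unfolding Ap_def by (rule someI_ex[OF Aex[OF e]])
  define piece where "piece e u = (if u = Min e then Ap e else Bp e)" for e u
  define BS where "BS u = (\<Union>e\<in>{e\<in>edges H. u \<in> e}. piece e u)" for u
  have eMM: "e = {Min e, Max e}" "Min e \<noteq> Max e" if "e \<in> edges H" for e
    using edge_H[OF fH that] by auto
  have pc: "f (Inl u) \<in> piece e u \<and> connected_in G (piece e u)" if e: "e \<in> edges H" "u \<in> e" for e u
  proof (cases "u = Min e")
    case True
    then show ?thesis using Aprop[OF e(1)] unfolding piece_def p_def by simp
  next
    case False
    then have "u = Max e" using eMM[OF e(1)] e(2) by blast
    then show ?thesis using Bprop[OF e(1)] False k1 unfolding piece_def p_def by simp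
  qed
  have pvG: "piece e u \<subseteq> verts G" if e: "e \<in> edges H" for e u
  proof -
    have "(\<Union>i\<in>{0..<m}. set (\<omega> e i)) \<subseteq> verts G"
    proof (rule UN_least)
      fix i assume "i \<in> {0..<m}"
      then have "i < k" using mk by simp
      then show "set (\<omega> e i) \<subseteq> verts G" by (rule segV[OF e])
    qed
    then have "Ap e \<subseteq> verts G" using Aprop[OF e] by blast
    moreover have "Bp e \<subseteq> verts G" unfolding Bp_def
    proof (rule UN_least)
      fix i assume "i \<in> {m..<k}"
      then have "i < k" by simp
      then show "set (\<omega> e i) \<subseteq> verts G" by (rule segV[OF e])
    qed
    ultimately show ?thesis unfolding piece_def by simp
  qed
  have zone: "\<exists>i\<le>k. sd k e u i \<le> k - m \<and> real (gdist G (f (p e i)) x) \<le> \<alpha>"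
    if e: "e \<in> edges H" "u \<in> e" "x \<in> piece e u" for e u x
  proof (cases "u = Min e")
    case True
    then have "x \<in> Ap e" using e(3) unfolding piece_def by simp
    then obtain i where i: "i < m" "x \<in> set (\<omega> e i)" using Aprop[OF e(1)] by auto
    then show ?thesis using segd[OF e(1), of i x] True mk mm by (intro exI[of _ i]) (simp add: sd_def)
  next
    case False
    then have "x \<in> Bp e" using e(3) unfolding piece_def by simp
    then obtain i where i: "m \<le> i" "i < k" "x \<in> set (\<omega> e i)" unfolding Bp_def by auto
    then show ?thesis using segd[OF e(1), of i x] False by (intro exI[of _ i]) (simp add: sd_def)
  qed
  have disj: "BS u \<inter> BS v = {}" if uv: "u \<in> verts H" "v \<in> verts H" "u \<noteq> v" for u v
  proof (rule ccontr)
    assume "BS u \<inter> BS v \<noteq> {}"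
    then obtain x e e' where x: "e \<in> edges H" "u \<in> e" "x \<in> piece e u" "e' \<in> edges H" "v \<in> e'" "x \<in> piece e' v"
      unfolding BS_def by blast
    show False
    proof (cases "e = e'")
      case True
      then have "piece e u \<inter> piece e v = {}"
        using Aprop[OF x(1)] uv(3) x(2,5) eMM[OF x(1)] unfolding piece_def by auto
      then show False using x True by blast
    next
      case False
      obtain i where i: "i \<le> k" "sd k e u i \<le> k - m" "real (gdist G (f (p e i)) x) \<le> \<alpha>"
        using zone[OF x(1-3)] by blast
      obtain j where j: "j \<le> k" "sd k e' v j \<le> k - m" "real (gdist G (f (p e' j)) x) \<le> \<alpha>"
        using zone[OF x(4-6)] by blast
      have xG: "x \<in> verts G" using pvG[OF x(1)] x(3) by blast
      have PG: "f (p e i) \<in> verts G" "f (p e' j) \<in> verts G" using fpV[OF x(1) i(1)] fpV[OF x(4) j(1)] by simp_all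
      have "gdist G (f (p e i)) (f (p e' j)) \<le> gdist G (f (p e i)) x + gdist G x (f (p e' j))"
        by (rule gdist_tri[OF rG[OF PG(1) xG] rG[OF xG PG(2)]])
      moreover have "gdist G x (f (p e' j)) = gdist G (f (p e' j)) x" by (rule gdist_sym[OF rG[OF PG(2) xG]])
      ultimately have dG: "real (gdist G (f (p e i)) (f (p e' j))) \<le> 2 * \<alpha>" using i(3) j(3) by linarith
      have dJ: "real (gdist J (p e i) (p e' j)) \<le> 2 * D"
      proof (cases "p e i = p e' j")
        case True
        then show ?thesis using gdist_refl[of "p e' j" J] pV[OF x(4) j(1)] D0 by simp
      next
        case ne: False
        have "real (gdist J (p e i) (p e' j)) \<le> \<beta> * real (gdist G (f (p e i)) (f (p e' j)))"
          using P2[OF pV[OF x(1) i(1), unfolded J_def] pV[OF x(4) j(1), unfolded J_def] ne] unfolding J_def .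
        also have "\<dots> \<le> \<beta> * (2 * \<alpha>)" by (rule mult_left_mono[OF dG b0])
        also have "\<dots> = 2 * D" unfolding D_def by (simp add: mult_ac)
        finally show ?thesis .
      qed
      have "int k - int (k - m) \<le> int (gdist J (p e i) (p e' j))"
        using lower_diff[OF fH cH k1 x(1,4) False x(2,5) uv(3) i(1) j(1) i(2) j(2)] mk
        unfolding J_def p_def by simp
      then have "m \<le> gdist J (p e i) (p e' j)" using mk by linarith
      then show False using dJ mD by linarith
    qed
  qed
  show ?thesis unfolding is_minor_def
  proof (intro exI[of _ BS] conjI)
    show "\<forall>v\<in>verts H. BS v \<noteq> {} \<and> BS v \<subseteq> verts G \<and> connected_in G (BS v)"
    proof
      fix v assume v: "v \<in> verts H"
      obtain e where e: "e \<in> edges H" "v \<in> e" using hv v by blast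
      have "BS v \<noteq> {}" using pc[OF e] e unfolding BS_def by blast
      moreover have "BS v \<subseteq> verts G" using pvG unfolding BS_def by blast
      moreover have "connected_in G (BS v)" unfolding BS_def
        by (rule connected_Union[where z = "f (Inl v)"]) (use pc in blast)
      ultimately show "BS v \<noteq> {} \<and> BS v \<subseteq> verts G \<and> connected_in G (BS v)" by blast
    qed
    show "\<forall>u\<in>verts H. \<forall>v\<in>verts H. u \<noteq> v \<longrightarrow> BS u \<inter> BS v = {}" using disj by blast
    show "\<forall>u v. {u, v} \<in> edges H \<longrightarrow> (\<exists>x\<in>BS u. \<exists>y\<in>BS v. {x, y} \<in> edges G)"
    proof (intro allI impI)
      fix u v assume uv0: "{u, v} \<in> edges H"
      define e where "e = {u,v}"
      have uv: "e \<in> edges H" using uv0 e_def by simp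
      have ue: "u \<in> e" and ve: "v \<in> e" unfolding e_def by simp_all
      have "\<exists>x\<in>Ap e. \<exists>y\<in>Bp e. {x,y} \<in> edges G"
        using Aprop[OF uv, THEN conjunct2, THEN conjunct2, THEN conjunct2, THEN conjunct2] .
      then obtain x y where xy: "x \<in> Ap e" "y \<in> Bp e" "{x,y} \<in> edges G" by (elim bexE)
      have mm1: "e = {Min e, Max e}" and mm2: "Min e \<noteq> Max e" using eMM[OF uv] by blast+
      have ne: "u \<noteq> v"
      proof
        assume "u = v"
        then have "e = {u}" unfolding e_def by simp
        then show False using edge_H(1)[OF fH uv] by simp
      qed
      have uMM: "u = Min e \<or> u = Max e" using ue mm1 by blast
      have vMM: "v = Min e \<or> v = Max e" using ve mm1 by blast
      have uBS: "piece e u \<subseteq> BS u" and vBS: "piece e v \<subseteq> BS v" unfolding BS_def using uv ue ve by blast+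
      show "\<exists>x\<in>BS u. \<exists>y\<in>BS v. {x, y} \<in> edges G"
      proof (cases "u = Min e")
        case True
        then have "v \<noteq> Min e" using ne by simp
        then have "x \<in> BS u" "y \<in> BS v" using xy(1,2) True uBS vBS unfolding piece_def by auto
        then show ?thesis using xy(3) by blast
      next
        case False
        have "v = Min e" using False uMM vMM ne by blast
        then have "y \<in> BS u" "x \<in> BS v" using xy(1,2) False uBS vBS unfolding piece_def by auto
        moreover have "{y,x} \<in> edges G" using xy(3) by (simp add: insert_commute)
        ultimately show ?thesis by blast
      qed
    qed
  qed
qed

lemma finite_pairs: "finite V \<Longrightarrow> finite {g x y | x y. x \<in> V \<and> y \<in> V \<and> x \<noteq> y}"
proof -
  assume "finite V"
  moreover have "{g x y | x y. x \<in> V \<and> y \<in> V \<and> x \<noteq> y} \<subseteq> (\<lambda>(x,y). g x y) ` (V \<times> V)" by auto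
  ultimately show ?thesis by (meson finite_SigmaI finite_imageI finite_subset)
qed

lemma finite_verts_sub:
  fixes H :: "'b::linorder graph"
  assumes "fin_graph H"
  shows "finite (verts (subdivision k H))"
proof -
  have fV: "finite (verts H)" using assms by (simp add: fin_graph_def)
  have "edges H \<subseteq> Pow (verts H)" using assms by (auto simp: fin_graph_def)
  then have fE: "finite (edges H)" using fV by (meson finite_Pow_iff finite_subset)
  have "{Inr (e, i) | e i. e \<in> edges H \<and> 0 < i \<and> i < k} \<subseteq> (\<lambda>(e,i). (Inr (e,i) :: 'b + ('b set \<times> nat))) ` (edges H \<times> {..<k})"
    by auto
  moreover have "finite ((\<lambda>(e,i). (Inr (e,i) :: 'b + ('b set \<times> nat))) ` (edges H \<times> {..<k}))"
    using fE by simp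
  ultimately have "finite ({Inr (e, i) | e i. e \<in> edges H \<and> 0 < i \<and> i < k} :: ('b + ('b set \<times> nat)) set)"
    by (rule finite_subset)
  then show ?thesis unfolding verts_sub using fV by simp
qed

theorem lemma1:
  fixes G :: "'a graph" and H :: "'b::linorder graph" and k :: nat
    and f :: "'b + ('b set \<times> nat) \<Rightarrow> 'a"
  assumes "fin_graph G" and "fin_graph H"
    and "connected_graph G" and "connected_graph H"
    and "\<not> is_minor H G"
    and "k \<ge> 1"
    and "inj_on f (verts (subdivision k H))"
    and "f ` verts (subdivision k H) \<subseteq> verts G"
  shows "distortion (subdivision k H) G f \<ge> real k / 6 - 1 / 2"
proof (rule ccontr)
  assume neg: "\<not> distortion (subdivision k H) G f \<ge> real k / 6 - 1 / 2"
  note fH = assms(2) and cG = assms(3) and cH = assms(4) and nm = assms(5) and k1 = assms(6)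
    and inj = assms(7) and fV = assms(8)
  define J where "J = subdivision k H"
  define V where "V = verts J"
  have hv: "\<forall>u\<in>verts H. \<exists>e\<in>edges H. u \<in> e"
  proof (rule ccontr)
    assume "\<not> (\<forall>u\<in>verts H. \<exists>e\<in>edges H. u \<in> e)"
    then obtain u where u: "u \<in> verts H" "\<not> (\<exists>e\<in>edges H. u \<in> e)" by blast
    have vH: "verts H = {u}" and eH: "edges H = {}" using all_verts_in_edges[OF fH cH u] by simp_all
    have "Inl u \<in> verts (subdivision k H)" using u(1) by (simp add: verts_sub)
    then have fu: "f (Inl u) \<in> verts G" using fV by blast
    have "is_minor H G" unfolding is_minor_def
      by (rule exI[of _ "\<lambda>_. {f (Inl u)}"]) (simp add: vH eH fu connected_single)
    then show False using nm by simp
  qed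
  obtain e0 where e0: "e0 \<in> edges H"
  proof (cases "edges H = {}")
    case True
    then have "verts H = {}" using hv by blast
    then have "is_minor H G" unfolding is_minor_def using True
      by (intro exI[of _ "\<lambda>_. {}"]) simp
    then show ?thesis using nm by simp
  next
    case False
    then show ?thesis using that by blast
  qed
  define \<alpha> where "\<alpha> = expansion J G f"
  define \<beta> where "\<beta> = contraction J G f"
  have finV: "finite V" unfolding V_def J_def by (rule finite_verts_sub[OF fH])
  have rG: "reach G x y" if "x \<in> verts G" "y \<in> verts G" for x y
    using cG that unfolding connected_graph_def connected_in_def reach_def by blast
  have aM: "real (gdist G (f x) (f y)) / real (gdist J x y) \<le> \<alpha>" if "x \<in> V" "y \<in> V" "x \<noteq> y" for x y
    unfolding \<alpha>_def expansion_def
    by (rule Max_ge[OF finite_pairs[OF finV[unfolded V_def]]]) (use that V_def in blast)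
  have bM: "real (gdist J x y) / real (gdist G (f x) (f y)) \<le> \<beta>" if "x \<in> V" "y \<in> V" "x \<noteq> y" for x y
    unfolding \<beta>_def contraction_def
    by (rule Max_ge[OF finite_pairs[OF finV[unfolded V_def]]]) (use that V_def in blast)
  have pV: "sub_node k e i \<in> V" if "e \<in> edges H" "i \<le> k" for e i
    using sub_node_verts[OF fH that] unfolding V_def J_def .
  have fVG: "f x \<in> verts G" if "x \<in> V" for x using fV that unfolding V_def J_def by blast
  have dG1: "1 \<le> gdist G (f x) (f y)" if "x \<in> V" "y \<in> V" "x \<noteq> y" for x y
  proof -
    have "f x \<noteq> f y" using inj that unfolding V_def J_def inj_on_def by blast
    then show ?thesis using gdist_pos[OF rG[OF fVG[OF that(1)] fVG[OF that(2)]]] by blast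
  qed
  have dJ1: "gdist J (sub_node k e i) (sub_node k e (Suc i)) = 1" if e: "e \<in> edges H" "i < k" for e i
  proof -
    have ne: "sub_node k e i \<noteq> sub_node k e (Suc i)" using sub_node_inj[OF fH e(1), where i=i and j="Suc i" and k=k] e(2) by simp
    have r: "reach J (sub_node k e i) (sub_node k e (Suc i))"
      using reach_sub_nodes[OF fH cH k1 e(1) e(1), where i=i and j="Suc i"] e(2) unfolding J_def by simp
    have "walk J [sub_node k e i, sub_node k e (Suc i)]"
      using sub_node_edge[OF e(1,2)] pV[OF e(1), of i] pV[OF e(1), of "Suc i"] e(2)
      unfolding V_def J_def by (simp add: walk_CC)
    then have "gdist J (sub_node k e i) (sub_node k e (Suc i)) \<le> 1" using gdist_le[of J "[sub_node k e i, sub_node k e (Suc i)]"] by simp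
    moreover have "1 \<le> gdist J (sub_node k e i) (sub_node k e (Suc i))" by (rule gdist_pos[OF r ne])
    ultimately show ?thesis by simp
  qed
  have P1: "real (gdist G (f (sub_node k e i)) (f (sub_node k e (Suc i)))) \<le> \<alpha>" if e: "e \<in> edges H" "i < k" for e i
  proof -
    have ne: "sub_node k e i \<noteq> sub_node k e (Suc i)" using sub_node_inj[OF fH e(1), where i=i and j="Suc i" and k=k] e(2) by simp
    have "real (gdist G (f (sub_node k e i)) (f (sub_node k e (Suc i)))) / real (gdist J (sub_node k e i) (sub_node k e (Suc i))) \<le> \<alpha>"
      using aM[OF pV[OF e(1), of i] pV[OF e(1), of "Suc i"] ne] e(2) by simp
    then show ?thesis using dJ1[OF e] by simp
  qed
  have P2: "real (gdist J x y) \<le> \<beta> * real (gdist G (f x) (f y))" if "x \<in> V" "y \<in> V" "x \<noteq> y" for x y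
  proof -
    have pos: "0 < real (gdist G (f x) (f y))" using dG1[OF that] by simp
    have "real (gdist J x y) / real (gdist G (f x) (f y)) \<le> \<beta>" using bM[OF that] .
    then show ?thesis using pos by (simp add: divide_le_eq mult.commute)
  qed
  have ne0: "sub_node k e0 0 \<noteq> sub_node k e0 1" using sub_node_inj[OF fH e0, where i=0 and j=1 and k=k] k1 by simp
  have a0: "\<alpha> \<ge> 0" using P1[OF e0, of 0] k1 by (meson of_nat_0_le_iff order_trans le_numeral_extra(1) less_le_trans zero_less_one)
  have b0: "\<beta> \<ge> 0"
  proof -
    have "0 \<le> real (gdist J (sub_node k e0 0) (sub_node k e0 1)) / real (gdist G (f (sub_node k e0 0)) (f (sub_node k e0 1)))"
      by simp
    also have "\<dots> \<le> \<beta>" using bM[OF pV[OF e0, of 0] pV[OF e0, of 1] ne0] k1 by simp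
    finally show ?thesis .
  qed
  have "distortion (subdivision k H) G f = \<alpha> * \<beta>" unfolding distortion_def \<alpha>_def \<beta>_def J_def ..
  then have small: "6 * (\<alpha> * \<beta>) + 3 < real k" using neg by linarith
  have "is_minor H G"
    by (rule minor_construct[OF fH cG cH k1 inj fV hv P1 P2[unfolded V_def J_def] a0 b0 small])
  then show False using nm by simp
qed

end
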